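(* Let $(W,\unlhd,\prec)$ be an intuitionistic modal Kripke frame, and let $\lhd$ denote the strict part of $\unlhd$ (i.e. $\unlhd$ minus the identity). The following are equivalent: (i) $\prec\,=\,\lhd$ and the Alexandroff topology on $W$ whose open sets are the $\unlhd$-upward closed sets is scattered; (ii) $(W,\unlhd,\prec)$ is a frame for $\mathsf{KM}$ (every theorem of $\mathsf{KM}$ is valid in it); (iii) $\prec\,=\,\lhd$ and there is no infinite strictly ascending $\lhd$-chain $w_0\lhd w_1\lhd w_2\lhd\cdots$ in $W$.
   Context: An intuitionistic modal Kripke frame is a triple $(W,\unlhd,\prec)$ with $\unlhd$ a partial order on $W$ and $\prec$ a binary relation such that $w\unlhd v$ and $v\prec x$ imply $w\prec x$. Formulas are built from propositional variables, $\bot,\to,\wedge,\vee,\Box$. A valuation assigns to each variable a $\unlhd$-upward closed subset of $W$; connectives are interpreted as in the Heyting algebra of upsets, and $\Box A$ denotes $\{w\mid \forall x(w\prec x\Rightarrow x\in A)\}$. A formula is valid in the frame if it denotes $W$ under every valuation. $\mathsf{KM}$ is the smallest set of formulas containing all axioms of intuitionistic propositional logic, $\Box(A\to B)\to(\Box A\to\Box B)$, $(\Box A\to A)\to A$ and $\Box A\to((B\to A)\vee B)$, and closed under modus ponens, necessitation ($A/\Box A$) and substitution. A topological space is scattered if every nonempty subset has an isolated point. *)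

theory Defs
  imports Main
begin

datatype 'v fm = Var 'v | Bot | Imp "'v fm" "'v fm" | Conj "'v fm" "'v fm"
  | Disj "'v fm" "'v fm" | Box "'v fm"

primrec subst :: "('v \<Rightarrow> 'u fm) \<Rightarrow> 'v fm \<Rightarrow> 'u fm" where
  "subst s (Var p) = s p"
| "subst s Bot = Bot"
| "subst s (Imp A B) = Imp (subst s A) (subst s B)"
| "subst s (Conj A B) = Conj (subst s A) (subst s B)"
| "subst s (Disj A B) = Disj (subst s A) (subst s B)"
| "subst s (Box A) = Box (subst s A)"

inductive_set KM :: "nat fm set" where
  ax1: "Imp A (Imp B A) \<in> KM"
| ax2: "Imp (Imp A (Imp B C)) (Imp (Imp A B) (Imp A C)) \<in> KM"
| ax3: "Imp (Conj A B) A \<in> KM"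
| ax4: "Imp (Conj A B) B \<in> KM"
| ax5: "Imp A (Imp B (Conj A B)) \<in> KM"
| ax6: "Imp A (Disj A B) \<in> KM"
| ax7: "Imp B (Disj A B) \<in> KM"
| ax8: "Imp (Imp A C) (Imp (Imp B C) (Imp (Disj A B) C)) \<in> KM"
| ax9: "Imp Bot A \<in> KM"
| axK: "Imp (Box (Imp A B)) (Imp (Box A) (Box B)) \<in> KM"
| axL: "Imp (Imp (Box A) A) A \<in> KM"
| axKM: "Imp (Box A) (Disj (Imp B A) B) \<in> KM"
| mp: "A \<in> KM \<Longrightarrow> Imp A B \<in> KM \<Longrightarrow> B \<in> KM"
| nec: "A \<in> KM \<Longrightarrow> Box A \<in> KM"
| sub: "A \<in> KM \<Longrightarrow> subst s A \<in> KM"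

text \<open>Intuitionistic modal Kripke frame on the carrier type 'w
(W = UNIV): le is a partial order, and le;R is contained in R.\<close>
definition imk_frame :: "('w \<Rightarrow> 'w \<Rightarrow> bool) \<Rightarrow> ('w \<Rightarrow> 'w \<Rightarrow> bool) \<Rightarrow> bool" where
  "imk_frame le R \<longleftrightarrow>
     (\<forall>w. le w w) \<and> (\<forall>u v w. le u v \<longrightarrow> le v w \<longrightarrow> le u w) \<and>
     (\<forall>u v. le u v \<longrightarrow> le v u \<longrightarrow> u = v) \<and>
     (\<forall>w v x. le w v \<longrightarrow> R v x \<longrightarrow> R w x)"

definition upset :: "('w \<Rightarrow> 'w \<Rightarrow> bool) \<Rightarrow> 'w set \<Rightarrow> bool" where
  "upset le U \<longleftrightarrow> (\<forall>x y. x \<in> U \<longrightarrow> le x y \<longrightarrow> y \<in> U)"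

primrec den :: "('w \<Rightarrow> 'w \<Rightarrow> bool) \<Rightarrow> ('w \<Rightarrow> 'w \<Rightarrow> bool) \<Rightarrow> ('v \<Rightarrow> 'w set) \<Rightarrow> 'v fm \<Rightarrow> 'w set" where
  "den le R V (Var p) = V p"
| "den le R V Bot = {}"
| "den le R V (Imp A B) = {w. \<forall>v. le w v \<longrightarrow> v \<in> den le R V A \<longrightarrow> v \<in> den le R V B}"
| "den le R V (Conj A B) = den le R V A \<inter> den le R V B"
| "den le R V (Disj A B) = den le R V A \<union> den le R V B"
| "den le R V (Box A) = {w. \<forall>x. R w x \<longrightarrow> x \<in> den le R V A}"

definition valid_in :: "('w \<Rightarrow> 'w \<Rightarrow> bool) \<Rightarrow> ('w \<Rightarrow> 'w \<Rightarrow> bool) \<Rightarrow> 'v fm \<Rightarrow> bool" where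
  "valid_in le R A \<longleftrightarrow> (\<forall>V. (\<forall>p. upset le (V p)) \<longrightarrow> den le R V A = UNIV)"

definition KM_frame :: "('w \<Rightarrow> 'w \<Rightarrow> bool) \<Rightarrow> ('w \<Rightarrow> 'w \<Rightarrow> bool) \<Rightarrow> bool" where
  "KM_frame le R \<longleftrightarrow> (\<forall>A \<in> KM. valid_in le R A)"

definition strict_part :: "('w \<Rightarrow> 'w \<Rightarrow> bool) \<Rightarrow> 'w \<Rightarrow> 'w \<Rightarrow> bool" where
  "strict_part le w v \<longleftrightarrow> le w v \<and> w \<noteq> v"

text \<open>Alexandroff topology: open sets are the upsets. Scattered: every
nonempty subset has an isolated point.\<close>
definition alex_scattered :: "('w \<Rightarrow> 'w \<Rightarrow> bool) \<Rightarrow> bool" where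
  "alex_scattered le \<longleftrightarrow>
     (\<forall>S. S \<noteq> {} \<longrightarrow> (\<exists>x\<in>S. \<exists>U. upset le U \<and> x \<in> U \<and> U \<inter> S = {x}))"

end

theory Submission
  imports Defs
begin

lemma den_upset:
  assumes "imk_frame le R" "\<forall>p. upset le (V p)"
  shows "upset le (den le R V A)"
  using assms
proof (induction A)
  case (Imp A B)
  have t: "\<And>u v w. le u v \<Longrightarrow> le v w \<Longrightarrow> le u w" using Imp.prems unfolding imk_frame_def by blast
  show ?case unfolding upset_def by (simp, meson t)
next
  case (Box A)
  have t: "\<And>w v x. le w v \<Longrightarrow> R v x \<Longrightarrow> R w x" using Box.prems unfolding imk_frame_def by blast
  show ?case unfolding upset_def by (simp, meson t)
qed (auto simp: upset_def)

lemma den_subst: "den le R V (subst s A) = den le R (\<lambda>p. den le R V (s p)) A"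
  by (induction A) auto

definition srel :: "('w \<Rightarrow> 'w \<Rightarrow> bool) \<Rightarrow> ('w \<times> 'w) set" where
  "srel le = {(y,x). strict_part le x y}"

lemma chain_wf: "(\<not> (\<exists>f :: nat \<Rightarrow> 'w. \<forall>n. strict_part le (f n) (f (Suc n)))) \<longleftrightarrow> wf (srel le)"
  by (simp add: wf_iff_no_infinite_down_chain srel_def)

lemma scat_wf:
  fixes le R :: "'w \<Rightarrow> 'w \<Rightarrow> bool"
  assumes "imk_frame le R"
  shows "alex_scattered le \<longleftrightarrow> wf (srel le)"
proof
  assume sc: "alex_scattered le"
  show "wf (srel le)"
  proof (rule ccontr)
    assume "\<not> wf (srel le)"
    then obtain f where f: "\<forall>n. strict_part le (f n) (f (Suc n))"
      using chain_wf by blast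
    have "range f \<noteq> {}" by simp
    then have "\<exists>x\<in>range f. \<exists>U. upset le U \<and> x \<in> U \<and> U \<inter> range f = {x}"
      using sc unfolding alex_scattered_def by blast
    then obtain n U where U: "upset le U" "f n \<in> U" "U \<inter> range f = {f n}" by blast
    have s: "le (f n) (f (Suc n))" "f n \<noteq> f (Suc n)" using f unfolding strict_part_def by auto
    have "f (Suc n) \<in> U" using U(1,2) s(1) unfolding upset_def by blast
    hence "f (Suc n) \<in> U \<inter> range f" by simp
    thus False using U(3) s(2) by simp
  qed
next
  assume w: "wf (srel le)"
  show "alex_scattered le" unfolding alex_scattered_def
  proof (intro allI impI)
    fix S :: "'w set" assume "S \<noteq> {}"
    then obtain x0 where "x0 \<in> S" by blast
    then obtain x where x: "x \<in> S" "\<And>y. (y, x) \<in> srel le \<Longrightarrow> y \<notin> S"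
      using wfE_min[OF w] by metis
    have rf: "le x x" and tr: "\<And>u v w. le u v \<Longrightarrow> le v w \<Longrightarrow> le u w"
      using assms unfolding imk_frame_def by blast+
    have "upset le {y. le x y}" unfolding upset_def using tr by blast
    moreover have "{y. le x y} \<inter> S = {x}"
    proof -
      have "y = x" if "le x y" "y \<in> S" for y
        using x(2)[of y] that unfolding srel_def strict_part_def by auto
      thus ?thesis using rf x(1) by auto
    qed
    ultimately show "\<exists>x\<in>S. \<exists>U. upset le U \<and> x \<in> U \<and> U \<inter> S = {x}"
      using x(1) rf by blast
  qed
qed

lemma sound:
  fixes le R :: "'w \<Rightarrow> 'w \<Rightarrow> bool"
  assumes fr: "imk_frame le R" and RR: "R = strict_part le" and w: "wf (srel le)"
    and "A \<in> KM"
  shows "valid_in le R A"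
  using assms(4)
proof (induction rule: KM.induct)
  case (axL A)
  show ?case unfolding valid_in_def
  proof (intro allI impI)
    fix V :: "nat \<Rightarrow> 'w set" assume V: "\<forall>p. upset le (V p)"
    let ?A = "den le R V A"
    have uX: "upset le (den le R V (Imp (Box A) A))" using den_upset[OF fr V] .
    have rf: "\<And>x. le x x" and tr: "\<And>u v w. le u v \<Longrightarrow> le v w \<Longrightarrow> le u w"
      using fr unfolding imk_frame_def by blast+
    have "u \<in> ?A" if u: "u \<in> den le R V (Imp (Box A) A)" for u
    proof (rule ccontr)
      assume "u \<notin> ?A"
      hence "u \<in> {v. le u v \<and> v \<notin> ?A}" using rf by simp
      then obtain v where v: "v \<in> {v. le u v \<and> v \<notin> ?A}"
        "\<And>y. (y, v) \<in> srel le \<Longrightarrow> y \<notin> {v. le u v \<and> v \<notin> ?A}"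
        by (rule wfE_min[OF w]) blast+
      have vX: "v \<in> den le R V (Imp (Box A) A)" using uX u v(1) unfolding upset_def by blast
      have "v \<in> den le R V (Box A)"
      proof -
        have "x \<in> ?A" if "R v x" for x
        proof -
          have "strict_part le v x" using that RR by simp
          hence "(x, v) \<in> srel le" unfolding srel_def by simp
          moreover have "le u x" using v(1) tr \<open>strict_part le v x\<close>
            unfolding strict_part_def by blast
          ultimately have "(x, v) \<in> srel le" "le u x" by blast+
          thus ?thesis using v(2) by blast
        qed
        thus ?thesis by simp
      qed
      hence "v \<in> ?A" using vX rf[of v] by simp
      thus False using v(1) by blast
    qed
    hence H: "\<And>u. u \<in> den le R V (Imp (Box A) A) \<Longrightarrow> u \<in> ?A" by blast
    show "den le R V (Imp (Imp (Box A) A) A) = UNIV"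
      unfolding den.simps(3)[of le R V "Imp (Box A) A" A] using H by blast
  qed
next
  case (axKM A B)
  show ?case unfolding valid_in_def
  proof (intro allI impI)
    fix V :: "nat \<Rightarrow> 'w set" assume V: "\<forall>p. upset le (V p)"
    show "den le R V (Imp (Box A) (Disj (Imp B A) B)) = UNIV"
      using RR unfolding strict_part_def by auto
  qed
next
  case (sub A s)
  show ?case unfolding valid_in_def
  proof (intro allI impI)
    fix V :: "nat \<Rightarrow> 'w set" assume V: "\<forall>p. upset le (V p)"
    have "\<forall>p. upset le (den le R V (s p))" using den_upset[OF fr V] by blast
    thus "den le R V (subst s A) = UNIV"
    proof -
      assume H: "\<forall>p. upset le (den le R V (s p))"
      have "valid_in le R A" using sub.IH .
      hence "\<forall>V'. (\<forall>p. upset le (V' p)) \<longrightarrow> den le R V' A = UNIV" unfolding valid_in_def .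
      hence "den le R (\<lambda>p. den le R V (s p)) A = UNIV" using H by simp
      thus ?thesis unfolding den_subst .
    qed
  qed
next
  case (mp A B)
  have rf: "\<And>x. le x x" using fr unfolding imk_frame_def by blast
  show ?case unfolding valid_in_def
  proof (intro allI impI)
    fix V :: "nat \<Rightarrow> 'w set" assume V: "\<forall>p. upset le (V p)"
    have "den le R V A = UNIV" "den le R V (Imp A B) = UNIV" using mp.IH V unfolding valid_in_def by blast+
    thus "den le R V B = UNIV" using rf by auto
  qed
next
  case (nec A)
  then show ?case unfolding valid_in_def by auto
next
  case (ax1 A B) show ?case unfolding valid_in_def
  proof (intro allI impI)
    fix V :: "nat \<Rightarrow> 'w set" assume V: "\<forall>p. upset le (V p)"
    have "upset le (den le R V A)" using den_upset[OF fr V] .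
    thus "den le R V (Imp A (Imp B A)) = UNIV" unfolding upset_def by auto
  qed
next
  case (ax2 A B C) show ?case unfolding valid_in_def
  proof (intro allI impI)
    fix V :: "nat \<Rightarrow> 'w set" assume V: "\<forall>p. upset le (V p)"
    have rf: "\<And>x. le x x" and tr: "\<And>u v w. le u v \<Longrightarrow> le v w \<Longrightarrow> le u w"
      using fr unfolding imk_frame_def by blast+
    show "den le R V (Imp (Imp A (Imp B C)) (Imp (Imp A B) (Imp A C))) = UNIV"
      by (simp add: set_eq_iff) (blast intro: rf tr)
  qed
next
  case (ax3 A B) thus ?case unfolding valid_in_def by auto
next
  case (ax4 A B) thus ?case unfolding valid_in_def by auto
next
  case (ax5 A B) show ?case unfolding valid_in_def
  proof (intro allI impI)
    fix V :: "nat \<Rightarrow> 'w set" assume V: "\<forall>p. upset le (V p)"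
    have "upset le (den le R V A)" using den_upset[OF fr V] .
    thus "den le R V (Imp A (Imp B (Conj A B))) = UNIV" unfolding upset_def by auto
  qed
next
  case (ax6 A B) thus ?case unfolding valid_in_def by auto
next
  case (ax7 A B) thus ?case unfolding valid_in_def by auto
next
  case (ax8 A C B) show ?case unfolding valid_in_def
  proof (intro allI impI)
    fix V :: "nat \<Rightarrow> 'w set" assume V: "\<forall>p. upset le (V p)"
    have rf: "\<And>x. le x x" and tr: "\<And>u v w. le u v \<Longrightarrow> le v w \<Longrightarrow> le u w"
      using fr unfolding imk_frame_def by blast+
    show "den le R V (Imp (Imp A C) (Imp (Imp B C) (Imp (Disj A B) C))) = UNIV"
      by (simp add: set_eq_iff) (blast intro: rf tr)
  qed
next
  case (ax9 A) thus ?case unfolding valid_in_def by auto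
next
  case (axK A B) show ?case unfolding valid_in_def
  proof (intro allI impI)
    fix V :: "nat \<Rightarrow> 'w set" assume V: "\<forall>p. upset le (V p)"
    have rf: "\<And>x. le x x" and tr: "\<And>w v x. le w v \<Longrightarrow> R v x \<Longrightarrow> R w x"
      using fr unfolding imk_frame_def by blast+
    show "den le R V (Imp (Box (Imp A B)) (Imp (Box A) (Box B))) = UNIV"
      by (simp add: set_eq_iff) (blast intro: rf tr)
  qed
qed


lemma valid_KM:
  assumes "KM_frame le R" "A \<in> KM" "\<forall>p. upset le (V p)"
  shows "den le R V A = UNIV"
  using assms unfolding KM_frame_def valid_in_def by blast

lemma lob_sem:
  fixes le R :: "'w \<Rightarrow> 'w \<Rightarrow> bool"
  assumes km: "KM_frame le R" and fr: "imk_frame le R" and P: "upset le P" and w: "w \<notin> P"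
  shows "\<exists>v. le w v \<and> v \<notin> P \<and> (\<forall>x. R v x \<longrightarrow> x \<in> P)"
proof -
  have ax: "Imp (Imp (Box (Var 0)) (Var 0)) (Var (0::nat)) \<in> KM" by (rule KM.axL)
  have "den le R (\<lambda>_. P) (Imp (Imp (Box (Var 0)) (Var 0)) (Var (0::nat))) = UNIV"
    using valid_KM[OF km ax, of "\<lambda>_. P"] P by simp
  hence "w \<in> den le R (\<lambda>_. P) (Imp (Imp (Box (Var 0)) (Var 0)) (Var (0::nat)))" by simp
  hence H: "\<forall>u. le w u \<longrightarrow> (\<forall>v. le u v \<longrightarrow> (\<forall>x. R v x \<longrightarrow> x \<in> P) \<longrightarrow> v \<in> P) \<longrightarrow> u \<in> P"
    by simp
  have "le w w" using fr unfolding imk_frame_def by blast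
  with H w show ?thesis by blast
qed

lemma km_sem:
  fixes le R :: "'w \<Rightarrow> 'w \<Rightarrow> bool"
  assumes km: "KM_frame le R" and fr: "imk_frame le R" and P: "upset le P" and Q: "upset le Q"
    and box: "\<forall>x. R w x \<longrightarrow> x \<in> P" and wQ: "w \<notin> Q" and wv: "le w v" and vQ: "v \<in> Q"
  shows "v \<in> P"
proof -
  define V :: "nat \<Rightarrow> 'w set" where "V = (\<lambda>n. if n = 0 then P else Q)"
  have VU: "\<forall>p. upset le (V p)" using P Q unfolding V_def by simp
  have ax: "Imp (Box (Var 0)) (Disj (Imp (Var 1) (Var 0)) (Var (1::nat))) \<in> KM" by (rule KM.axKM)
  have "den le R V (Imp (Box (Var 0)) (Disj (Imp (Var 1) (Var 0)) (Var (1::nat)))) = UNIV"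
    using valid_KM[OF km ax VU] .
  hence "w \<in> den le R V (Imp (Box (Var 0)) (Disj (Imp (Var 1) (Var 0)) (Var (1::nat))))" by simp
  hence H: "\<forall>u. le w u \<longrightarrow> (\<forall>x. R u x \<longrightarrow> x \<in> P) \<longrightarrow>
      ((\<forall>v. le u v \<longrightarrow> v \<in> Q \<longrightarrow> v \<in> P) \<or> u \<in> Q)"
    unfolding V_def by simp
  have "le w w" using fr unfolding imk_frame_def by blast
  with H box wQ have "\<forall>v. le w v \<longrightarrow> v \<in> Q \<longrightarrow> v \<in> P" by blast
  thus ?thesis using wv vQ by blast
qed

lemma R_sub:
  fixes le R :: "'w \<Rightarrow> 'w \<Rightarrow> bool"
  assumes km: "KM_frame le R" and fr: "imk_frame le R" and Rwx: "R w x"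
  shows "strict_part le w x"
proof -
  have rf: "\<And>x. le x x" and tr: "\<And>u v w. le u v \<Longrightarrow> le v w \<Longrightarrow> le u w"
    and as: "\<And>u v. le u v \<Longrightarrow> le v u \<Longrightarrow> u = v"
    using fr unfolding imk_frame_def by blast+
  let ?P = "{y. \<not> le y w \<and> \<not> le y x}"
  have "upset le ?P" unfolding upset_def using tr by blast
  moreover have "w \<notin> ?P" using rf by blast
  ultimately obtain v where v: "le w v" "v \<notin> ?P" "\<forall>y. R v y \<longrightarrow> y \<in> ?P"
    using lob_sem[OF km fr] by blast
  have lwx: "le w x"
  proof (cases "le v w")
    case True
    hence "v = w" using as v(1) by blast
    hence "x \<in> ?P" using v(3) Rwx by blast
    thus ?thesis using rf by blast
  next
    case False
    hence "le v x" using v(2) by blast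
    thus ?thesis using tr v(1) by blast
  qed
  let ?P2 = "{y. \<not> le y w}"
  have "upset le ?P2" unfolding upset_def using tr by blast
  moreover have "w \<notin> ?P2" using rf by blast
  ultimately obtain v2 where v2: "le w v2" "v2 \<notin> ?P2" "\<forall>y. R v2 y \<longrightarrow> y \<in> ?P2"
    using lob_sem[OF km fr] by blast
  have "v2 = w" using as v2(1,2) by blast
  hence "\<not> le x w" using v2(3) Rwx by blast
  hence "w \<noteq> x" using rf by blast
  thus ?thesis using lwx unfolding strict_part_def by blast
qed

lemma step_sem:
  fixes le R :: "'w \<Rightarrow> 'w \<Rightarrow> bool"
  assumes km: "KM_frame le R" and fr: "imk_frame le R" and uv: "strict_part le u v"
  shows "\<exists>z. R u z \<and> le z v"
proof (rule ccontr)
  assume "\<not> (\<exists>z. R u z \<and> le z v)"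
  hence box: "\<forall>x. R u x \<longrightarrow> x \<in> {y. \<not> le y v}" by blast
  have rf: "\<And>x. le x x" and tr: "\<And>u v w. le u v \<Longrightarrow> le v w \<Longrightarrow> le u w"
    and as: "\<And>u v. le u v \<Longrightarrow> le v u \<Longrightarrow> u = v"
    using fr unfolding imk_frame_def by blast+
  have P: "upset le {y. \<not> le y v}" unfolding upset_def using tr by blast
  have Q: "upset le {y. le v y}" unfolding upset_def using tr by blast
  have "u \<notin> {y. le v y}" using uv as unfolding strict_part_def by blast
  moreover have "le u v" using uv unfolding strict_part_def by blast
  ultimately have "v \<in> {y. \<not> le y v}" using km_sem[OF km fr P Q box] rf by blast
  thus False using rf by blast
qed

lemma sub_R:
  fixes le R :: "'w \<Rightarrow> 'w \<Rightarrow> bool"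
  assumes km: "KM_frame le R" and fr: "imk_frame le R" and wv: "strict_part le w v"
  shows "R w v"
proof -
  have rf: "\<And>x. le x x" and tr: "\<And>u v w. le u v \<Longrightarrow> le v w \<Longrightarrow> le u w"
    and as: "\<And>u v. le u v \<Longrightarrow> le v u \<Longrightarrow> u = v"
    and dc: "\<And>w v x. le w v \<Longrightarrow> R v x \<Longrightarrow> R w x"
    using fr unfolding imk_frame_def by blast+
  let ?P = "{y. \<not> (\<exists>z. le y z \<and> le z v \<and> (R w z \<or> z = w))}"
  have "upset le ?P" unfolding upset_def using tr by blast
  moreover have "w \<notin> ?P" using rf wv unfolding strict_part_def by blast
  ultimately obtain u where u: "le w u" "u \<notin> ?P" "\<forall>y. R u y \<longrightarrow> y \<in> ?P"
    using lob_sem[OF km fr] by blast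
  from u(2) obtain z where z: "le u z" "le z v" "R w z \<or> z = w" by blast
  have "u = v"
  proof (rule ccontr)
    assume "u \<noteq> v"
    hence "strict_part le u v" using tr z unfolding strict_part_def by blast
    then obtain z' where z': "R u z'" "le z' v" using step_sem[OF km fr] by blast
    have "R w z'" using dc u(1) z'(1) .
    hence "z' \<notin> ?P" using rf z'(2) by blast
    thus False using u(3) z'(1) by blast
  qed
  hence "z = v" using as z tr by blast
  thus ?thesis using z(3) wv unfolding strict_part_def by blast
qed

lemma KM_wf:
  fixes le R :: "'w \<Rightarrow> 'w \<Rightarrow> bool"
  assumes km: "KM_frame le R" and fr: "imk_frame le R"
  shows "wf (srel le)"
proof (rule ccontr)
  assume "\<not> wf (srel le)"
  then obtain f where f: "\<forall>n. strict_part le (f n) (f (Suc n))"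
    using chain_wf by blast
  have tr: "\<And>u v w. le u v \<Longrightarrow> le v w \<Longrightarrow> le u w"
    and rf: "\<And>x. le x x"
    and dc: "\<And>w v x. le w v \<Longrightarrow> R v x \<Longrightarrow> R w x"
    using fr unfolding imk_frame_def by blast+
  let ?P = "{y. \<not> (\<exists>n. le y (f n))}"
  have "upset le ?P" unfolding upset_def using tr by blast
  moreover have "f 0 \<notin> ?P" using rf by blast
  ultimately obtain v where v: "le (f 0) v" "v \<notin> ?P" "\<forall>y. R v y \<longrightarrow> y \<in> ?P"
    using lob_sem[OF km fr] by blast
  from v(2) obtain n where n: "le v (f n)" by blast
  have "R (f n) (f (Suc n))" using sub_R[OF km fr] f by blast
  hence "R v (f (Suc n))" using dc n by blast
  hence "f (Suc n) \<in> ?P" using v(3) by blast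
  thus False using rf by blast
qed


theorem corollary4p10:
  fixes le R :: "'w \<Rightarrow> 'w \<Rightarrow> bool"
  assumes "imk_frame le R"
  shows "((R = strict_part le \<and> alex_scattered le) \<longleftrightarrow> KM_frame le R)
       \<and> (KM_frame le R \<longleftrightarrow>
            (R = strict_part le \<and> \<not> (\<exists>f :: nat \<Rightarrow> 'w. \<forall>n. strict_part le (f n) (f (Suc n)))))"
proof -
  have main: "KM_frame le R \<longleftrightarrow> (R = strict_part le \<and> wf (srel le))"
  proof
    assume km: "KM_frame le R"
    have "R = strict_part le"
    proof (intro ext iffI)
      fix w x assume "R w x" thus "strict_part le w x" using R_sub[OF km assms] by blast
    next
      fix w x assume "strict_part le w x" thus "R w x" using sub_R[OF km assms] by blast
    qed
    thus "R = strict_part le \<and> wf (srel le)" using KM_wf[OF km assms] by blast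
  next
    assume h: "R = strict_part le \<and> wf (srel le)"
    show "KM_frame le R" unfolding KM_frame_def
      using sound[OF assms] h by blast
  qed
  show ?thesis using main scat_wf[OF assms] chain_wf[of le] by blast
qed

end
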